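(* If the Markov chain $\mathcal{M}$ is started from a connected configuration with no holes, then it never reaches a configuration with a hole.
   Context: Let $\Gamma$ be the triangular lattice; a configuration is a finite set of occupied vertices ("locations") of $\Gamma$, each occupied by one particle; it is connected if the subgraph induced by occupied locations is connected. A hole is a maximal finite connected set of unoccupied locations. For a location $\ell$, $N(\ell)$ is the set of particles at locations adjacent to $\ell$. For adjacent $\ell,\ell'$, let $\mathbb{S}=N(\ell)\cap N(\ell')$ and $N(\ell\cup\ell')=(N(\ell)\cup N(\ell'))$ minus particles located at $\ell$ or $\ell'$. Property 1: $|\mathbb{S}|\in\{1,2\}$ and every particle in $N(\ell\cup\ell')$ is connected to a particle of $\mathbb{S}$ by a lattice path all of whose vertices are particles of $N(\ell\cup\ell')$. Property 2: $|\mathbb{S}|=0$; each of $\ell,\ell'$ has at least one adjacent particle other than one located at the other location; the particles of $N(\ell)$ not at $\ell'$ are connected by paths within this set; the particles of $N(\ell')$ not at $\ell$ are connected by paths within this set. One step of $\mathcal{M}$ (bias $\lambda>0$) from $\sigma$: choose a particle $P$ uniformly (location $\ell$), a neighbor $\ell'$ of $\ell$ uniformly among six, and $q$ uniform in $(0,1)$. If $\ell'$ is occupied, do nothing. Otherwise let $t$ (resp. $t'$) be the number of triangular faces incident to $\ell$ (resp. $\ell'$) with all three vertices occupied when $P$ is at $\ell$ (resp. at $\ell'$); move $P$ to $\ell'$ if (1) $\ell$ does not have exactly five occupied neighbors, (2) $\ell,\ell'$ satisfy Property 1 or 2, and (3) $q<\lambda^{t'-t}$; else do nothing. *)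

theory Defs
  imports Complex_Main
begin

text \<open>Triangular lattice: vertices are int x int (axial coordinates); the six
neighbours of (x,y) are (x+-1,y), (x,y+-1), (x+1,y-1), (x-1,y+1).\<close>

type_synonym loc = "int \<times> int"

definition adj :: "loc \<Rightarrow> loc \<Rightarrow> bool" where
  "adj p q \<longleftrightarrow> (let dx = fst q - fst p; dy = snd q - snd p in
     (dx, dy) \<in> {(1,0), (-1,0), (0,1), (0,-1), (1,-1), (-1,1)})"

definition faces :: "loc set set" where
  "faces = {{(x,y), (x+1,y), (x,y+1)} | x y. True} \<union>
           {{(x+1,y), (x,y+1), (x+1,y+1)} | x y. True}"

definition path_in :: "loc set \<Rightarrow> loc \<Rightarrow> loc \<Rightarrow> bool" where
  "path_in A u v \<longleftrightarrow> u \<in> A \<and> (\<lambda>a b. adj a b \<and> a \<in> A \<and> b \<in> A)\<^sup>*\<^sup>* u v"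

definition set_connected :: "loc set \<Rightarrow> bool" where
  "set_connected A \<longleftrightarrow> (\<forall>u\<in>A. \<forall>v\<in>A. path_in A u v)"

definition is_hole :: "loc set \<Rightarrow> loc set \<Rightarrow> bool" where
  "is_hole \<sigma> H \<longleftrightarrow> H \<noteq> {} \<and> finite H \<and> H \<inter> \<sigma> = {} \<and> set_connected H \<and>
     (\<forall>H'. H \<subseteq> H' \<and> finite H' \<and> H' \<inter> \<sigma> = {} \<and> set_connected H' \<longrightarrow> H' = H)"

definition has_hole :: "loc set \<Rightarrow> bool" where
  "has_hole \<sigma> \<longleftrightarrow> (\<exists>H. is_hole \<sigma> H)"

definition nbrs :: "loc set \<Rightarrow> loc \<Rightarrow> loc set" where
  "nbrs \<sigma> l = {p \<in> \<sigma>. adj l p}"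

definition common_nbrs :: "loc set \<Rightarrow> loc \<Rightarrow> loc \<Rightarrow> loc set" where
  "common_nbrs \<sigma> l l' = nbrs \<sigma> l \<inter> nbrs \<sigma> l'"

definition nbrs2 :: "loc set \<Rightarrow> loc \<Rightarrow> loc \<Rightarrow> loc set" where
  "nbrs2 \<sigma> l l' = (nbrs \<sigma> l \<union> nbrs \<sigma> l') - {l, l'}"

definition property1 :: "loc set \<Rightarrow> loc \<Rightarrow> loc \<Rightarrow> bool" where
  "property1 \<sigma> l l' \<longleftrightarrow> card (common_nbrs \<sigma> l l') \<in> {1, 2} \<and>
     (\<forall>p \<in> nbrs2 \<sigma> l l'. \<exists>s \<in> common_nbrs \<sigma> l l'. path_in (nbrs2 \<sigma> l l') p s)"

definition property2 :: "loc set \<Rightarrow> loc \<Rightarrow> loc \<Rightarrow> bool" where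
  "property2 \<sigma> l l' \<longleftrightarrow> card (common_nbrs \<sigma> l l') = 0 \<and>
     nbrs \<sigma> l - {l'} \<noteq> {} \<and> nbrs \<sigma> l' - {l} \<noteq> {} \<and>
     set_connected (nbrs \<sigma> l - {l'}) \<and> set_connected (nbrs \<sigma> l' - {l})"

definition tri_count :: "loc set \<Rightarrow> loc \<Rightarrow> nat" where
  "tri_count \<sigma> l = card {T \<in> faces. l \<in> T \<and> T \<subseteq> \<sigma>}"

text \<open>One transition of M with positive probability: a particle at l moves to
an adjacent empty l', for some choice of q in (0,1) satisfying the Metropolis test.\<close>
definition move :: "real \<Rightarrow> loc set \<Rightarrow> loc set \<Rightarrow> bool" where
  "move lam \<sigma> \<sigma>' \<longleftrightarrow> (\<exists>l l'. l \<in> \<sigma> \<and> adj l l' \<and> l' \<notin> \<sigma> \<and>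
     card (nbrs \<sigma> l) \<noteq> 5 \<and>
     (property1 \<sigma> l l' \<or> property2 \<sigma> l l') \<and>
     \<sigma>' = insert l' (\<sigma> - {l}) \<and>
     (\<exists>q::real. 0 < q \<and> q < 1 \<and>
        q < lam powr (real_of_int (int (tri_count \<sigma>' l') - int (tri_count \<sigma> l)))))"

end

theory Submission
  imports Defs
begin


lemma adj_sym: "adj p q \<Longrightarrow> adj q p"
  by (cases p; cases q) (auto simp: adj_def Let_def)

lemma adj_irrefl: "\<not> adj p p"
  by (cases p) (auto simp: adj_def Let_def)

lemma adj_iff: "adj (a,b) w \<longleftrightarrow> w \<in> {(a+1,b),(a-1,b),(a,b+1),(a,b-1),(a+1,b-1),(a-1,b+1)}"
  by (cases w) (auto simp: adj_def Let_def)

lemma finite_adj: "finite {w. adj p w}"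
proof -
  obtain a b where p: "p = (a,b)" by (cases p)
  show ?thesis unfolding p adj_iff by simp
qed

lemma path_in_refl: "u \<in> A \<Longrightarrow> path_in A u u"
  by (simp add: path_in_def)

lemma path_in_end: "path_in A u v \<Longrightarrow> v \<in> A"
proof -
  assume "path_in A u v"
  then have "(\<lambda>a b. adj a b \<and> a \<in> A \<and> b \<in> A)\<^sup>*\<^sup>* u v" "u \<in> A" unfolding path_in_def by auto
  then show ?thesis by (induction rule: rtranclp_induct) auto
qed

lemma path_in_step: "path_in A u v \<Longrightarrow> adj v w \<Longrightarrow> w \<in> A \<Longrightarrow> path_in A u w"
  using path_in_end[of A u v] unfolding path_in_def
  by (auto intro: rtranclp.rtrancl_into_rtrancl)

lemma path_in_trans: "path_in A u v \<Longrightarrow> path_in A v w \<Longrightarrow> path_in A u w"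
  unfolding path_in_def by auto

lemma path_in_sym: "path_in A u v \<Longrightarrow> path_in A v u"
proof -
  assume h: "path_in A u v"
  have "(\<lambda>a b. adj a b \<and> a \<in> A \<and> b \<in> A)\<^sup>*\<^sup>* u v \<Longrightarrow> u \<in> A \<Longrightarrow> path_in A v u"
  proof (induction rule: rtranclp_induct)
    case base then show ?case by (simp add: path_in_refl)
  next
    case (step y z)
    then have "path_in A z y" unfolding path_in_def using adj_sym by blast
    then show ?case using step path_in_trans by blast
  qed
  then show ?thesis using h unfolding path_in_def by blast
qed

lemma path_in_mono: "path_in A u v \<Longrightarrow> A \<subseteq> B \<Longrightarrow> path_in B u v"
proof -
  assume h: "path_in A u v" and s: "A \<subseteq> B"
  have "(\<lambda>a b. adj a b \<and> a \<in> A \<and> b \<in> A)\<^sup>*\<^sup>* u v \<Longrightarrow> (\<lambda>a b. adj a b \<and> a \<in> B \<and> b \<in> B)\<^sup>*\<^sup>* u v"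
    by (induction rule: rtranclp_induct) (use s in \<open>auto intro: rtranclp.rtrancl_into_rtrancl\<close>)
  then show ?thesis using h s unfolding path_in_def by blast
qed

lemma path_in_adj: "adj u v \<Longrightarrow> u \<in> A \<Longrightarrow> v \<in> A \<Longrightarrow> path_in A u v"
  using path_in_step path_in_refl by blast

lemma trap:
  assumes "path_in A x s" "x \<in> T" "\<And>w w'. w \<in> T \<Longrightarrow> adj w w' \<Longrightarrow> w' \<in> A \<Longrightarrow> w' \<in> T"
  shows "s \<in> T"
proof -
  have "(\<lambda>a b. adj a b \<and> a \<in> A \<and> b \<in> A)\<^sup>*\<^sup>* x s" using assms(1) unfolding path_in_def by blast
  then show ?thesis by (induction rule: rtranclp_induct) (use assms in auto)
qed

lemma exit_edge:
  assumes "path_in A u w" "u \<in> H" "w \<notin> H"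
  shows "\<exists>h x. h \<in> H \<and> x \<notin> H \<and> adj h x \<and> x \<in> A"
proof (rule ccontr)
  assume n: "\<not> ?thesis"
  have "w \<in> H" using trap[OF assms(1) assms(2)] n by blast
  then show False using assms by blast
qed

definition C :: "loc set \<Rightarrow> loc \<Rightarrow> loc set" where
  "C A u = {w. path_in A u w}"

lemma path_in_comp:
  assumes "path_in A u a" shows "path_in (C A u) u a"
proof -
  have "(\<lambda>a b. adj a b \<and> a \<in> A \<and> b \<in> A)\<^sup>*\<^sup>* u a" "u \<in> A" using assms unfolding path_in_def by auto
  then show ?thesis
  proof (induction rule: rtranclp_induct)
    case base then show ?case by (simp add: path_in_refl C_def)
  next
    case (step y z)
    then have "path_in A u z" unfolding path_in_def by (auto intro: rtranclp.rtrancl_into_rtrancl)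
    then show ?case using step path_in_step[of "C A u" u y z] by (auto simp: C_def)
  qed
qed

lemma conn_insert:
  assumes "set_connected H" "h \<in> H" "adj h w"
  shows "set_connected (insert w H)"
proof -
  have m: "path_in H a b \<Longrightarrow> path_in (insert w H) a b" for a b using path_in_mono by blast
  have wh: "path_in (insert w H) w h" using assms by (intro path_in_adj) (auto intro: adj_sym)
  have hb: "b \<in> H \<Longrightarrow> path_in (insert w H) h b" for b using assms m unfolding set_connected_def by blast
  show ?thesis unfolding set_connected_def
  proof (intro ballI)
    fix a b assume a: "a \<in> insert w H" and b: "b \<in> insert w H"
    show "path_in (insert w H) a b"
    proof (cases "a = w")
      case True
      then show ?thesis
        using b wh hb path_in_trans path_in_refl by (metis insertCI insertE)
    next
      case False
      then have aH: "a \<in> H" using a by auto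
      show ?thesis
      proof (cases "b = w")
        case True
        then show ?thesis using aH wh hb path_in_trans path_in_sym assms(1) m
          unfolding set_connected_def by (metis assms(2))
      next
        case False
        then show ?thesis using aH b m assms(1) unfolding set_connected_def by auto
      qed
    qed
  qed
qed

lemma no_hole_iff: "\<not> has_hole \<sigma> \<longleftrightarrow> (\<forall>u. u \<notin> \<sigma> \<longrightarrow> infinite (C (-\<sigma>) u))"
proof
  assume nh: "\<not> has_hole \<sigma>"
  show "\<forall>u. u \<notin> \<sigma> \<longrightarrow> infinite (C (-\<sigma>) u)"
  proof (intro allI impI notI)
    fix u assume u: "u \<notin> \<sigma>" and f: "finite (C (-\<sigma>) u)"
    let ?H = "C (-\<sigma>) u"
    have "u \<in> ?H" using u path_in_refl[of u "-\<sigma>"] by (auto simp: C_def)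
    then have ne: "?H \<noteq> {}" by blast
    have dj: "?H \<inter> \<sigma> = {}" using path_in_end[of "-\<sigma>" u] unfolding C_def by blast
    have sc: "set_connected ?H" unfolding set_connected_def
    proof (intro ballI)
      fix a b assume "a \<in> ?H" "b \<in> ?H"
      then have "path_in ?H u a" "path_in ?H u b" using path_in_comp by (auto simp: C_def)
      then show "path_in ?H a b" using path_in_sym path_in_trans by blast
    qed
    have mx: "\<forall>H'. ?H \<subseteq> H' \<and> finite H' \<and> H' \<inter> \<sigma> = {} \<and> set_connected H' \<longrightarrow> H' = ?H"
    proof (intro allI impI)
      fix H' assume h: "?H \<subseteq> H' \<and> finite H' \<and> H' \<inter> \<sigma> = {} \<and> set_connected H'"
      have uH: "u \<in> H'" using h u path_in_refl[of u "-\<sigma>"] by (auto simp: C_def)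
      have "H' \<subseteq> ?H"
      proof
        fix w assume "w \<in> H'"
        then have "path_in H' u w" using h uH unfolding set_connected_def by blast
        then have "path_in (-\<sigma>) u w" using h path_in_mono by blast
        then show "w \<in> ?H" by (simp add: C_def)
      qed
      then show "H' = ?H" using h by blast
    qed
    have "is_hole \<sigma> ?H" unfolding is_hole_def using ne f dj sc mx by blast
    then show False using nh unfolding has_hole_def by blast
  qed
next
  assume hf: "\<forall>u. u \<notin> \<sigma> \<longrightarrow> infinite (C (-\<sigma>) u)"
  show "\<not> has_hole \<sigma>"
  proof
    assume "has_hole \<sigma>"
    then obtain H where H: "is_hole \<sigma> H" unfolding has_hole_def by blast
    then obtain u where uH: "u \<in> H" unfolding is_hole_def by blast
    have Hs: "H \<subseteq> -\<sigma>" using H unfolding is_hole_def by blast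
    have u: "u \<notin> \<sigma>" using uH Hs by blast
    have sub: "H \<subseteq> C (-\<sigma>) u"
    proof
      fix h assume "h \<in> H"
      then have "path_in H u h" using H uH unfolding is_hole_def set_connected_def by blast
      then show "h \<in> C (-\<sigma>) u" using Hs path_in_mono by (auto simp: C_def)
    qed
    have "C (-\<sigma>) u \<noteq> H" using hf u H unfolding is_hole_def by metis
    then obtain w where "w \<in> C (-\<sigma>) u" "w \<notin> H" using sub by blast
    then obtain h x where hx: "h \<in> H" "x \<notin> H" "adj h x" "x \<in> -\<sigma>"
      using exit_edge[of "-\<sigma>" u w H] uH by (auto simp: C_def)
    let ?H' = "insert x H"
    have "H \<subseteq> ?H' \<and> finite ?H' \<and> ?H' \<inter> \<sigma> = {} \<and> set_connected ?H'"
      using H hx conn_insert[of H h x] unfolding is_hole_def by auto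
    then have "?H' = H" using H unfolding is_hole_def by blast
    then show False using hx by blast
  qed
qed



definition geo :: "loc \<Rightarrow> loc \<Rightarrow> (nat \<Rightarrow> loc) \<Rightarrow> loc \<Rightarrow> loc \<Rightarrow> loc \<Rightarrow> bool" where
  "geo l l' v y1 y2 y3 \<longleftrightarrow> (\<forall>w. adj l' w \<longleftrightarrow> w \<in> {l, v 0, v 1, v 2, v 3, v 4}) \<and>
   (\<forall>w. adj l w \<longleftrightarrow> w \<in> {l', v 0, v 4, y1, y2, y3}) \<and>
   distinct [l, l', v 0, v 1, v 2, v 3, v 4, y1, y2, y3] \<and>
   adj (v 0) (v 1) \<and> adj (v 1) (v 2) \<and> adj (v 2) (v 3) \<and> adj (v 3) (v 4) \<and> adj (v 0) l \<and> adj (v 4) l \<and>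
   (\<forall>w. adj (v 1) w \<longrightarrow> (adj l w \<or> adj l' w) \<longrightarrow> w \<in> {l, l', v 0, v 2}) \<and>
   (\<forall>w. adj (v 2) w \<longrightarrow> (adj l w \<or> adj l' w) \<longrightarrow> w \<in> {l, l', v 1, v 3}) \<and>
   (\<forall>w. adj (v 3) w \<longrightarrow> (adj l w \<or> adj l' w) \<longrightarrow> w \<in> {l, l', v 2, v 4})"

lemma geo0: "geo (a,b) (a + 1, b) (\<lambda>m. [(a, b + 1), (a + 1, b + 1), (a + 2, b), (a + 2, b - 1), (a + 1, b - 1)] ! m) (a - 1, b + 1) (a - 1, b) (a, b - 1)"
  unfolding geo_def by (simp add: adj_iff) (auto simp: adj_iff)

lemma geo1: "geo (a,b) (a, b + 1) (\<lambda>m. [(a - 1, b + 1), (a - 1, b + 2), (a, b + 2), (a + 1, b + 1), (a + 1, b)] ! m) (a - 1, b) (a, b - 1) (a + 1, b - 1)"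
  unfolding geo_def by (simp add: adj_iff) (auto simp: adj_iff)

lemma geo2: "geo (a,b) (a - 1, b + 1) (\<lambda>m. [(a - 1, b), (a - 2, b + 1), (a - 2, b + 2), (a - 1, b + 2), (a, b + 1)] ! m) (a, b - 1) (a + 1, b - 1) (a + 1, b)"
  unfolding geo_def by (simp add: adj_iff) (auto simp: adj_iff)

lemma geo3: "geo (a,b) (a - 1, b) (\<lambda>m. [(a, b - 1), (a - 1, b - 1), (a - 2, b), (a - 2, b + 1), (a - 1, b + 1)] ! m) (a + 1, b - 1) (a + 1, b) (a, b + 1)"
  unfolding geo_def by (simp add: adj_iff) (auto simp: adj_iff)

lemma geo4: "geo (a,b) (a, b - 1) (\<lambda>m. [(a + 1, b - 1), (a + 1, b - 2), (a, b - 2), (a - 1, b - 1), (a - 1, b)] ! m) (a + 1, b) (a, b + 1) (a - 1, b + 1)"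
  unfolding geo_def by (simp add: adj_iff) (auto simp: adj_iff)

lemma geo5: "geo (a,b) (a + 1, b - 1) (\<lambda>m. [(a + 1, b), (a + 2, b - 1), (a + 2, b - 2), (a + 1, b - 2), (a, b - 1)] ! m) (a, b + 1) (a - 1, b + 1) (a - 1, b)"
  unfolding geo_def by (simp add: adj_iff) (auto simp: adj_iff)

lemma geom: assumes "adj l l'" shows "\<exists>v y1 y2 y3. geo l l' v y1 y2 y3"
proof -
  obtain a b where l: "l = (a,b)" by (cases l)
  have "l' \<in> {(a+1,b),(a-1,b),(a,b+1),(a,b-1),(a+1,b-1),(a-1,b+1)}" using assms adj_iff l by blast
  then show ?thesis unfolding l using geo0 geo1 geo2 geo3 geo4 geo5 by (elim insertE emptyE) (simp_all, blast+)
qed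



lemma local_conn:
  assumes G: "geo l l' v y1 y2 y3"
    and l\<sigma>: "l \<in> \<sigma>" and l'\<sigma>: "l' \<notin> \<sigma>"
    and P: "property1 \<sigma> l l' \<or> property2 \<sigma> l l'"
    and Qc: "\<And>a c. Q a \<Longrightarrow> adj a c \<Longrightarrow> c \<notin> insert l' (\<sigma> - {l}) \<Longrightarrow> Q c"
    and e: "adj l' e" "e \<notin> \<sigma>" "Q e" and e2: "adj l' e2" "e2 \<notin> \<sigma>"
  shows "Q e2"
proof -
  have N': "\<And>w. adj l' w \<longleftrightarrow> w \<in> {l, v 0, v 1, v 2, v 3, v 4}"
    and N: "\<And>w. adj l w \<longleftrightarrow> w \<in> {l', v 0, v 4, y1, y2, y3}"
    and D: "distinct [l, l', v 0, v 1, v 2, v 3, v 4, y1, y2, y3]"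
    and A: "adj (v 0) (v 1)" "adj (v 1) (v 2)" "adj (v 2) (v 3)" "adj (v 3) (v 4)" "adj (v 0) l" "adj (v 4) l"
    and T1: "\<And>w. adj (v 1) w \<Longrightarrow> (adj l w \<or> adj l' w) \<Longrightarrow> w \<in> {l, l', v 0, v 2}"
    and T2: "\<And>w. adj (v 2) w \<Longrightarrow> (adj l w \<or> adj l' w) \<Longrightarrow> w \<in> {l, l', v 1, v 3}"
    and T3: "\<And>w. adj (v 3) w \<Longrightarrow> (adj l w \<or> adj l' w) \<Longrightarrow> w \<in> {l, l', v 2, v 4}"
    using G unfolding geo_def by blast+
  have c4: "m \<le> 4 \<Longrightarrow> m = 0 \<or> m = 1 \<or> m = 2 \<or> m = 3 \<or> m = 4" for m :: nat by auto
  have vl': "m \<le> 4 \<Longrightarrow> v m \<noteq> l'" for m using c4[of m] D by auto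
  have vl: "m \<le> 4 \<Longrightarrow> v m \<noteq> l" for m using c4[of m] D by auto
  have inj: "m \<le> 4 \<Longrightarrow> m' \<le> 4 \<Longrightarrow> v m = v m' \<Longrightarrow> m = m'" for m m'
    using c4[of m] c4[of m'] D by auto
  have adjv: "m < 4 \<Longrightarrow> adj (v m) (v (Suc m))" for m
  proof -
    assume "m < 4"
    then have "m = 0 \<or> m = 1 \<or> m = 2 \<or> m = 3" by auto
    then show ?thesis using A by (auto simp: numeral_eq_Suc)
  qed
  have nb2: "w \<in> nbrs2 \<sigma> l l' \<longleftrightarrow> w \<in> \<sigma> \<and> (adj l w \<or> adj l' w) \<and> w \<noteq> l \<and> w \<noteq> l'" for w
    by (auto simp: nbrs2_def nbrs_def)
  have trapm: "1 \<le> m \<Longrightarrow> m \<le> 3 \<Longrightarrow> adj (v m) w \<Longrightarrow> w \<in> nbrs2 \<sigma> l l' \<Longrightarrow> w = v (m - 1) \<or> w = v (m + 1)" for m w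
  proof -
    assume m: "1 \<le> m" "m \<le> 3" and a: "adj (v m) w" and w: "w \<in> nbrs2 \<sigma> l l'"
    from w have w': "(adj l w \<or> adj l' w)" "w \<noteq> l" "w \<noteq> l'" using nb2 by auto
    from m have "m = 1 \<or> m = 2 \<or> m = 3" by auto
    then show ?thesis
    proof (elim disjE)
      assume "m = 1" then show ?thesis using T1[of w] a w' by (simp add: eval_nat_numeral)
    next
      assume "m = 2" then show ?thesis using T2[of w] a w' by (simp add: eval_nat_numeral)
    next
      assume "m = 3" then show ?thesis using T3[of w] a w' by (simp add: eval_nat_numeral)
    qed
  qed
  have Qup: "m < 4 \<Longrightarrow> Q (v m) \<Longrightarrow> v (Suc m) \<notin> \<sigma> \<Longrightarrow> Q (v (Suc m))" for m
    using Qc[of "v m" "v (Suc m)"] adjv[of m] vl'[of "Suc m"] by auto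
  have Qdown: "m < 4 \<Longrightarrow> Q (v (Suc m)) \<Longrightarrow> v m \<notin> \<sigma> \<Longrightarrow> Q (v m)" for m
    using Qc[of "v (Suc m)" "v m"] adjv[of m] adj_sym vl'[of m] by auto
  have chain: "i \<le> k \<Longrightarrow> k \<le> 4 \<Longrightarrow> (\<forall>m. i \<le> m \<and> m \<le> k \<longrightarrow> v m \<notin> \<sigma>) \<Longrightarrow> Q (v i) = Q (v k)" for i k
  proof (induction k)
    case 0 then show ?case by simp
  next
    case (Suc k)
    show ?case
    proof (cases "i = Suc k")
      case True then show ?thesis by simp
    next
      case False
      then have ik: "i \<le> k" using Suc by simp
      have "Q (v i) = Q (v k)" using Suc ik by simp
      moreover have "v k \<notin> \<sigma>" "v (Suc k) \<notin> \<sigma>" using Suc ik by auto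
      ultimately show ?thesis using Qup[of k] Qdown[of k] Suc by auto
    qed
  qed
  have eidx: "adj l' x \<Longrightarrow> x \<notin> \<sigma> \<Longrightarrow> \<exists>i\<le>4. x = v i \<and> v i \<notin> \<sigma>" for x
  proof -
    assume "adj l' x" "x \<notin> \<sigma>"
    then have "x \<in> {v 0, v 1, v 2, v 3, v 4}" using N'[of x] l\<sigma> by auto
    then show ?thesis using \<open>x \<notin> \<sigma>\<close> by (metis empty_iff insert_iff le_numeral_extra(3) nat_le_linear not_numeral_le_zero one_le_numeral numeral_le_iff semiring_norm(69) semiring_norm(71) semiring_norm(72) order_refl)
  qed
  obtain i where i: "i \<le> 4" "e = v i" "v i \<notin> \<sigma>" using eidx e by blast
  obtain k where k: "k \<le> 4" "e2 = v k" "v k \<notin> \<sigma>" using eidx e2 by blast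
  have comm: "adj l s \<Longrightarrow> adj l' s \<Longrightarrow> s = v 0 \<or> s = v 4" for s
    using N[of s] N'[of s] D by auto
  show ?thesis
  proof (cases "property1 \<sigma> l l'")
    case True
    have pat: "i' < j \<Longrightarrow> j < k' \<Longrightarrow> k' \<le> 4 \<Longrightarrow> v i' \<notin> \<sigma> \<Longrightarrow> v k' \<notin> \<sigma> \<Longrightarrow> v j \<in> \<sigma> \<Longrightarrow> False" for i' j k'
    proof -
      assume h: "i' < j" "j < k'" "k' \<le> 4" "v i' \<notin> \<sigma>" "v k' \<notin> \<sigma>" "v j \<in> \<sigma>"
      have "adj l' (v j)" using N'[of "v j"] h c4[of j] by auto
      then have "v j \<in> nbrs2 \<sigma> l l'" using nb2 h vl vl' by auto
      then obtain s where s: "s \<in> common_nbrs \<sigma> l l'" "path_in (nbrs2 \<sigma> l l') (v j) s"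
        using True unfolding property1_def by blast
      have "s \<in> v ` {i'<..<k'}"
      proof (rule trap[OF s(2)])
        show "v j \<in> v ` {i'<..<k'}" using h by auto
      next
        fix w w' assume w: "w \<in> v ` {i'<..<k'}" and a: "adj w w'" and w': "w' \<in> nbrs2 \<sigma> l l'"
        then obtain m where m: "i' < m" "m < k'" "w = v m" by auto
        have "w' = v (m - 1) \<or> w' = v (m + 1)" using trapm[of m w'] m a w' h by auto
        moreover have "w' \<in> \<sigma>" using w' nb2 by auto
        ultimately show "w' \<in> v ` {i'<..<k'}"
        proof (elim disjE)
          assume a1: "w' = v (m - 1)" "w' \<in> \<sigma>"
          then have "m - 1 \<noteq> i'" using h by auto
          then show ?thesis using m a1 by (intro image_eqI[of _ _ "m - 1"]) auto
        next
          assume a1: "w' = v (m + 1)" "w' \<in> \<sigma>"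
          then have "m + 1 \<noteq> k'" using h by auto
          then show ?thesis using m a1 by (intro image_eqI[of _ _ "m + 1"]) auto
        qed
      qed
      then obtain m where m: "i' < m" "m < k'" "s = v m" by auto
      have "adj l s" "adj l' s" using s(1) unfolding common_nbrs_def nbrs_def by auto
      then have "s = v 0 \<or> s = v 4" using comm by blast
      then show False
      proof
        assume "s = v 0" then have "m = 0" using inj[of m 0] m h by auto
        then show False using m by auto
      next
        assume "s = v 4" then have "m = 4" using inj[of m 4] m h by auto
        then show False using m h by auto
      qed
    qed
    have between: "a \<le> b \<Longrightarrow> b \<le> 4 \<Longrightarrow> v a \<notin> \<sigma> \<Longrightarrow> v b \<notin> \<sigma> \<Longrightarrow> \<forall>m. a \<le> m \<and> m \<le> b \<longrightarrow> v m \<notin> \<sigma>" for a b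
      using pat by (metis le_neq_implies_less)
    show ?thesis
    proof (cases "i \<le> k")
      case True
      then show ?thesis using chain[of i k] between[of i k] i k e by auto
    next
      case False
      then show ?thesis using chain[of k i] between[of k i] i k e by auto
    qed
  next
    case False
    then have P2: "property2 \<sigma> l l'" using P by blast
    have fc: "finite (common_nbrs \<sigma> l l')"
      using finite_adj[of l] unfolding common_nbrs_def nbrs_def by (auto intro: finite_subset)
    then have ce: "common_nbrs \<sigma> l l' = {}" using P2 unfolding property2_def by auto
    have z0: "v 0 \<notin> \<sigma>" using ce A(5) adj_sym N'[of "v 0"] unfolding common_nbrs_def nbrs_def by blast
    have z4: "v 4 \<notin> \<sigma>" using ce A(6) adj_sym N'[of "v 4"] unfolding common_nbrs_def nbrs_def by blast
    have lnot: "l \<notin> insert l' (\<sigma> - {l})" using D by auto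
    have v0not: "v 0 \<notin> insert l' (\<sigma> - {l})" using z0 vl' by auto
    have v4not: "v 4 \<notin> insert l' (\<sigma> - {l})" using z4 vl' by auto
    have Ql0: "Q l = Q (v 0)" using Qc[of l "v 0"] Qc[of "v 0" l] A(5) adj_sym lnot v0not by blast
    have Ql4: "Q l = Q (v 4)" using Qc[of l "v 4"] Qc[of "v 4" l] A(6) adj_sym lnot v4not by blast
    have pat2: "v 1 \<in> \<sigma> \<Longrightarrow> v 2 \<notin> \<sigma> \<Longrightarrow> v 3 \<in> \<sigma> \<Longrightarrow> False"
    proof -
      assume h: "v 1 \<in> \<sigma>" "v 2 \<notin> \<sigma>" "v 3 \<in> \<sigma>"
      let ?N0 = "nbrs \<sigma> l' - {l}"
      have "v 1 \<in> ?N0" "v 3 \<in> ?N0" using h N' vl unfolding nbrs_def by auto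
      then have p: "path_in ?N0 (v 1) (v 3)" using P2 unfolding property2_def set_connected_def by blast
      have "v 3 \<in> {v 1}"
      proof (rule trap[OF p])
        fix w w' assume w: "w \<in> {v 1}" and a: "adj w w'" and w': "w' \<in> ?N0"
        have "w' \<in> nbrs2 \<sigma> l l'" using w' adj_irrefl[of l'] unfolding nbrs_def nb2 by auto
        then have "w' = v 0 \<or> w' = v 2" using trapm[of 1 w'] w a by (simp add: eval_nat_numeral)
        moreover have "w' \<in> \<sigma>" using w' unfolding nbrs_def by auto
        ultimately show "w' \<in> {v 1}" using z0 h by auto
      qed auto
      then show False using inj[of 3 1] by auto
    qed
    have toL: "m \<le> 4 \<Longrightarrow> v m \<notin> \<sigma> \<Longrightarrow> Q (v m) = Q l" for m
    proof -
      assume m: "m \<le> 4" "v m \<notin> \<sigma>"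
      show ?thesis
      proof (cases "\<forall>m'. 0 \<le> m' \<and> m' \<le> m \<longrightarrow> v m' \<notin> \<sigma>")
        case True then show ?thesis using chain[of 0 m] m Ql0 by auto
      next
        case F1: False
        then obtain j where j: "j \<le> m" "v j \<in> \<sigma>" by auto
        show ?thesis
        proof (cases "\<forall>m'. m \<le> m' \<and> m' \<le> 4 \<longrightarrow> v m' \<notin> \<sigma>")
          case True then show ?thesis using chain[of m 4] m Ql4 by auto
        next
          case False
          then obtain j' where j': "m \<le> j'" "j' \<le> 4" "v j' \<in> \<sigma>" by auto
          have "j \<noteq> 0" using j z0 by (metis)
          moreover have "j \<noteq> m" "j' \<noteq> m" using j j' m by auto
          moreover have "j' \<noteq> 4" using j' z4 by metis
          ultimately have "j = 1" "m = 2" "j' = 3" using j j' by auto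
          then show ?thesis using pat2 j j' m by auto
        qed
      qed
    qed
    show ?thesis using toL[of i] toL[of k] i k e by auto
  qed
qed



lemma step_nohole:
  assumes mv: "move lam \<sigma> \<sigma>'" and nh: "\<not> has_hole \<sigma>"
  shows "\<not> has_hole \<sigma>'"
proof -
  obtain l l' where l: "l \<in> \<sigma>" "adj l l'" "l' \<notin> \<sigma>" "card (nbrs \<sigma> l) \<noteq> 5"
    "property1 \<sigma> l l' \<or> property2 \<sigma> l l'" "\<sigma>' = insert l' (\<sigma> - {l})"
    using mv unfolding move_def by blast
  have hf: "\<forall>u. u \<notin> \<sigma> \<longrightarrow> infinite (C (-\<sigma>) u)" using nh no_hole_iff by blast
  obtain v y1 y2 y3 where G: "geo l l' v y1 y2 y3" using geom l(2) by blast
  have N: "\<And>w. adj l w \<longleftrightarrow> w \<in> {l', v 0, v 4, y1, y2, y3}"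
    and D: "distinct [l, l', v 0, v 1, v 2, v 3, v 4, y1, y2, y3]"
    using G unfolding geo_def by blast+
  define S where "S = insert l' \<sigma>"
  define E where "E = {w. adj l' w \<and> w \<notin> \<sigma>}"
  have SS: "-S \<subseteq> -\<sigma>'" using l(6) S_def by auto
  have finE: "finite E" using finite_adj[of l'] unfolding E_def by (auto intro: finite_subset)
  define Inf where "Inf w \<longleftrightarrow> infinite (C (-\<sigma>') w)" for w
  have Inf_conn: "path_in (-\<sigma>') u x \<Longrightarrow> Inf x \<Longrightarrow> Inf u" for u x
  proof -
    assume p: "path_in (-\<sigma>') u x" and i: "Inf x"
    have "C (-\<sigma>') x \<subseteq> C (-\<sigma>') u" using p path_in_trans unfolding C_def by blast
    then show "Inf u" using i unfolding Inf_def using finite_subset by blast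
  qed
  have Infc: "Inf a \<Longrightarrow> adj a c \<Longrightarrow> c \<notin> \<sigma>' \<Longrightarrow> Inf c" for a c
  proof -
    assume i: "Inf a" and a: "adj a c" and c: "c \<notin> \<sigma>'"
    have "C (-\<sigma>') a \<noteq> {}" using i unfolding Inf_def by auto
    then have "a \<in> -\<sigma>'" unfolding C_def path_in_def by auto
    then have "path_in (-\<sigma>') c a" using a c adj_sym path_in_adj by blast
    then show "Inf c" using Inf_conn i by blast
  qed
  have cover: "path_in (-\<sigma>) l' w \<Longrightarrow> w = l' \<or> (\<exists>e\<in>E. path_in (-S) e w)" for w
  proof -
    assume "path_in (-\<sigma>) l' w"
    then have "(\<lambda>a b. adj a b \<and> a \<in> -\<sigma> \<and> b \<in> -\<sigma>)\<^sup>*\<^sup>* l' w" unfolding path_in_def by blast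
    then show ?thesis
    proof (induction rule: rtranclp_induct)
      case base then show ?case by simp
    next
      case (step y z)
      show ?case
      proof (cases "z = l'")
        case True then show ?thesis by simp
      next
        case zn: False
        then have zS: "z \<in> -S" using step S_def by auto
        show ?thesis
        proof (cases "y = l'")
          case True
          then have "z \<in> E" using step unfolding E_def by auto
          then show ?thesis using zS path_in_refl by blast
        next
          case False
          then obtain e where "e \<in> E" "path_in (-S) e y" using step by blast
          then show ?thesis using path_in_step[of "-S" e y z] step zS by auto
        qed
      qed
    qed
  qed
  have "infinite (C (-\<sigma>) l')" using hf l(3) by blast
  moreover have "C (-\<sigma>) l' \<subseteq> insert l' (\<Union>e\<in>E. C (-S) e)"
    using cover unfolding C_def by blast
  ultimately have "infinite (\<Union>e\<in>E. C (-S) e)"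
    using finite_subset by (metis finite_insert)
  then obtain e where e: "e \<in> E" "infinite (C (-S) e)" using finE by blast
  have "C (-S) e \<subseteq> C (-\<sigma>') e" using SS path_in_mono unfolding C_def by blast
  then have Ie: "Inf e" using e finite_subset unfolding Inf_def by blast
  have InfE: "x \<in> E \<Longrightarrow> Inf x" for x
    using local_conn[OF G l(1) l(3) l(5), of Inf e x] Infc l(6) e Ie unfolding E_def by auto
  have gen: "u \<notin> \<sigma> \<Longrightarrow> u \<noteq> l' \<Longrightarrow> Inf u" for u
  proof -
    assume u: "u \<notin> \<sigma>" "u \<noteq> l'"
    have uS: "u \<in> -S" using u S_def by auto
    have alt: "path_in (-\<sigma>) u w \<Longrightarrow> path_in (-S) u w \<or> (\<exists>e\<in>E. path_in (-S) u e)" for w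
    proof -
      assume "path_in (-\<sigma>) u w"
      then have "(\<lambda>a b. adj a b \<and> a \<in> -\<sigma> \<and> b \<in> -\<sigma>)\<^sup>*\<^sup>* u w" unfolding path_in_def by blast
      then show ?thesis
      proof (induction rule: rtranclp_induct)
        case base then show ?case using uS path_in_refl by blast
      next
        case (step y z)
        show ?case
        proof (cases "\<exists>e\<in>E. path_in (-S) u e")
          case True then show ?thesis by blast
        next
          case False
          then have py: "path_in (-S) u y" using step by blast
          show ?thesis
          proof (cases "z = l'")
            case True
            then have "y \<in> E" using step adj_sym unfolding E_def by auto
            then show ?thesis using py by blast
          next
            case False
            then have "z \<in> -S" using step S_def by auto
            then show ?thesis using path_in_step[OF py] step by auto
          qed
        qed
      qed
    qed
    show "Inf u"
    proof (cases "\<exists>e\<in>E. path_in (-S) u e")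
      case True
      then obtain e where "e \<in> E" "path_in (-S) u e" by blast
      then show ?thesis using InfE Inf_conn path_in_mono[OF _ SS] by blast
    next
      case False
      then have "C (-\<sigma>) u \<subseteq> C (-\<sigma>') u" using alt path_in_mono[OF _ SS] unfolding C_def by blast
      then show ?thesis using hf u unfolding Inf_def using finite_subset by blast
    qed
  qed
  have Il: "Inf l"
  proof -
    have "\<exists>g\<in>{v 0, v 4, y1, y2, y3}. g \<notin> \<sigma>"
    proof (rule ccontr)
      assume "\<not> ?thesis"
      then have "nbrs \<sigma> l = {v 0, v 4, y1, y2, y3}" using N l(3) unfolding nbrs_def by auto
      then have "card (nbrs \<sigma> l) = 5" using D by simp
      then show False using l(4) by blast
    qed
    then obtain g where g: "g \<in> {v 0, v 4, y1, y2, y3}" "g \<notin> \<sigma>" by blast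
    have "g \<noteq> l'" "adj g l" using g D N[of g] adj_sym by auto
    then have "Inf g" using gen g by blast
    moreover have "l \<notin> \<sigma>'" using l(6) D by auto
    ultimately show ?thesis using Infc \<open>adj g l\<close> by blast
  qed
  have "\<forall>u. u \<notin> \<sigma>' \<longrightarrow> infinite (C (-\<sigma>') u)"
  proof (intro allI impI)
    fix u assume "u \<notin> \<sigma>'"
    then have "u = l \<or> (u \<notin> \<sigma> \<and> u \<noteq> l')" using l(6) by auto
    then show "infinite (C (-\<sigma>') u)" using Il gen unfolding Inf_def by blast
  qed
  then show ?thesis using no_hole_iff by blast
qed

theorem lemma5:
  fixes lam :: real and \<sigma>0 \<sigma> :: "loc set"
  assumes "lam > 0"
    and "finite \<sigma>0"
    and "set_connected \<sigma>0"
    and "\<not> has_hole \<sigma>0"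
    and "(move lam)\<^sup>*\<^sup>* \<sigma>0 \<sigma>"
  shows "\<not> has_hole \<sigma>"
  using assms(5,4)
  by (induction rule: rtranclp_induct) (use step_nohole in blast)+


end
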